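(* Let $\mathcal L:\mathbb F^{q\times q}\to\mathbb F^{n\times n}$ be $*$-linear, $m=\operatorname{rank}\mathbb L$, and let $L_1,\ldots,L_m$ and $L_1',\ldots,L_m'$ in $\mathbb F^{n\times q}$ both span $\operatorname{span}\{L_{ij}\}$. Let $A_k,B_k,\mathbb H$ be obtained from $L_1,\ldots,L_m$ by the construction below, and $A_k',B_k',\mathbb H'$ from $L_1',\ldots,L_m'$. Define $\widehat L,\widehat L',\widehat A,\widehat A'\in\mathbb F^{m\times nq}$ as the matrices whose $k$-th rows are $\operatorname{vec}_{n\times q}(\overline{L_k})^T$, $\operatorname{vec}_{n\times q}(\overline{L_k'})^T$, $\operatorname{vec}_{n\times q}(\overline{A_k})^T$, $\operatorname{vec}_{n\times q}(\overline{A_k'})^T$ respectively, and $$\Phi=[\vec{\mathbf 1}_n^*(B_k\circ\overline{A_l'})\vec{\mathbf 1}_q]_{k,l=1}^m,\qquad \Xi=[\vec{\mathbf 1}_n^*(B_k\circ\overline{L_l'})\vec{\mathbf 1}_q]_{k,l=1}^m.$$ Then $\widehat L=\overline{\mathbb H}\widehat A$, $\widehat L'=\overline{\mathbb H'}\widehat A'$, $\widehat L=\overline{\Phi}\widehat L'$, $\overline{\Phi}^*\widehat A=\widehat A'$, $\widehat L=\overline{\Xi}\widehat A'$, $\widehat L'=\overline{\Xi}^*\widehat A$, and $\mathbb H=\Phi\mathbb H'\Phi^*$. Moreover $\mathbb H=\Phi\Xi^*$, $\Phi\mathbb H'=\Xi$, $\Phi$ and $\Xi$ are invertible, $\Phi^{-1}=[\vec{\mathbf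 1}_n^*(B_k'\circ\overline{A_l})\vec{\mathbf 1}_q]_{k,l=1}^m$ and $\Xi^*=[\vec{\mathbf 1}_n^*(B_k'\circ\overline{L_l})\vec{\mathbf 1}_q]_{k,l=1}^m$. Finally $\ker\widehat L=\ker\widehat L'=\ker\widehat A=\ker\widehat A'=\ker\mathbb L$.
   Context: $\mathbb F\in\{\mathbb R,\mathbb C\}$; $\circ$ Hadamard product, $\vec{\mathbf 1}_p$ all-ones vector, $\overline X$ entrywise conjugate, $X^*$ conjugate transpose, $\operatorname{vec}$ column-stacking vectorization. Matricization $L\in\mathbb F^{n^2\times q^2}$ with $L\operatorname{vec}(V)=\operatorname{vec}(\mathcal L(V))$, blocks $L_{ij}\in\mathbb F^{n\times q}$ ($1\le i\le n$, $1\le j\le q$); Choi matrix $\mathbb L=[\mathcal L(\mathcal E^{(q)}_{ij})]_{i,j=1}^q$; $*$-linear: $\mathcal L(V^* )=\mathcal L(V)^*$. Construction: for $L_1,\ldots,L_m$ spanning $\operatorname{span}\{L_{ij}\}$ ($m=\operatorname{rank}\mathbb L$), let $L_{ij}=\sum_k\alpha^{ij}_kL_k$ (unique), $L_k=\sum_{i,j}\beta^k_{ij}L_{ij}$ (any choice); $A_k$ has $(i,j)$ entry $\overline{\alpha^{ij}_k}$, $B_k$ has $(i,j)$ entry $\beta^k_{ij}$, and $\mathbb H=[\vec{\mathbf 1}_n^*(B_k\circ\overline{L_l})\vec{\mathbf 1}_q]_{k,l=1}^m$. *)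

theory Defs
  imports "Jordan_Normal_Form.Schur_Decomposition" "Jordan_Normal_Form.DL_Rank" "Jordan_Normal_Form.Matrix_Kernel"
begin

text \<open>All indices are 0-based. Matrices are JNF matrices over a field with
  involution (conjugatable_field: covers both real, with trivial conjugation, and complex).\<close>

definition mat_conj :: "'a :: conjugatable_field mat \<Rightarrow> 'a mat" where
  "mat_conj A = map_mat conjugate A"

definition unit_mat :: "nat \<Rightarrow> nat \<Rightarrow> nat \<Rightarrow> 'a :: zero_neq_one mat" where
  "unit_mat q a b = mat q q (\<lambda>(x,y). if x = a \<and> y = b then 1 else 0)"

definition vecc :: "'a mat \<Rightarrow> 'a vec" where
  "vecc A = vec (dim_row A * dim_col A) (\<lambda>k. A $$ (k mod dim_row A, k div dim_row A))"

text \<open>Matricization of L : F^{q x q} -> F^{n x n}: the n^2 x q^2 matrix whose column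
  with index vec-position of E_{ab} is vec(L(E_{ab})), so that  Lmat *v vecc V = vecc (L V)
  for linear L.\<close>
definition matricization :: "('a :: zero_neq_one mat \<Rightarrow> 'a mat) \<Rightarrow> nat \<Rightarrow> nat \<Rightarrow> 'a mat" where
  "matricization \<L> n q = mat (n*n) (q*q) (\<lambda>(x,y). vecc (\<L> (unit_mat q (y mod q) (y div q))) $ x)"

definition Lblock :: "('a :: zero_neq_one mat \<Rightarrow> 'a mat) \<Rightarrow> nat \<Rightarrow> nat \<Rightarrow> nat \<Rightarrow> nat \<Rightarrow> 'a mat" where
  "Lblock \<L> n q i j = mat n q (\<lambda>(r,c). matricization \<L> n q $$ (i*n + r, j*q + c))"

definition choi :: "('a :: zero_neq_one mat \<Rightarrow> 'a mat) \<Rightarrow> nat \<Rightarrow> nat \<Rightarrow> 'a mat" where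
  "choi \<L> n q = mat (q*n) (q*n) (\<lambda>(x,y). \<L> (unit_mat q (x div n) (y div n)) $$ (x mod n, y mod n))"

definition star_linear :: "('a :: conjugatable_field mat \<Rightarrow> 'a mat) \<Rightarrow> nat \<Rightarrow> nat \<Rightarrow> bool" where
  "star_linear \<L> n q \<longleftrightarrow>
     (\<forall>V \<in> carrier_mat q q. \<L> V \<in> carrier_mat n n) \<and>
     (\<forall>V \<in> carrier_mat q q. \<forall>W \<in> carrier_mat q q. \<L> (V + W) = \<L> V + \<L> W) \<and>
     (\<forall>V \<in> carrier_mat q q. \<forall>c. \<L> (c \<cdot>\<^sub>m V) = c \<cdot>\<^sub>m \<L> V) \<and>
     (\<forall>V \<in> carrier_mat q q. \<L> (mat_adjoint V) = mat_adjoint (\<L> V))"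

definition mat_lincomb :: "nat \<Rightarrow> nat \<Rightarrow> 'b set \<Rightarrow> ('b \<Rightarrow> 'a :: comm_ring_1) \<Rightarrow> ('b \<Rightarrow> 'a mat) \<Rightarrow> 'a mat" where
  "mat_lincomb n q I c M = mat n q (\<lambda>(r,s). \<Sum>i\<in>I. c i * M i $$ (r,s))"

definition mat_span :: "nat \<Rightarrow> nat \<Rightarrow> 'b set \<Rightarrow> ('b \<Rightarrow> 'a :: comm_ring_1 mat) \<Rightarrow> 'a mat set" where
  "mat_span n q I M = {mat_lincomb n q I c M | c. True}"

definition hadamard :: "'a :: times mat \<Rightarrow> 'a mat \<Rightarrow> 'a mat" where
  "hadamard A B = mat (dim_row A) (dim_col A) (\<lambda>ij. A $$ ij * B $$ ij)"

definition ones_vec :: "nat \<Rightarrow> 'a :: one vec" where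
  "ones_vec n = vec n (\<lambda>_. 1)"

definition ones_form :: "'a :: conjugatable_field mat \<Rightarrow> 'a" where
  "ones_form X = conjugate (ones_vec (dim_row X)) \<bullet> (X *\<^sub>v ones_vec (dim_col X))"

definition gram_form :: "nat \<Rightarrow> (nat \<Rightarrow> 'a :: conjugatable_field mat) \<Rightarrow> (nat \<Rightarrow> 'a mat) \<Rightarrow> 'a mat" where
  "gram_form m X Y = mat m m (\<lambda>(k,l). ones_form (hadamard (X k) (mat_conj (Y l))))"

definition hat_mat :: "nat \<Rightarrow> nat \<Rightarrow> nat \<Rightarrow> (nat \<Rightarrow> 'a :: conjugatable_field mat) \<Rightarrow> 'a mat" where
  "hat_mat m n q X = mat m (n*q) (\<lambda>(k,x). vecc (mat_conj (X k)) $ x)"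

definition construction :: "('a :: conjugatable_field mat \<Rightarrow> 'a mat) \<Rightarrow> nat \<Rightarrow> nat \<Rightarrow> nat
    \<Rightarrow> (nat \<Rightarrow> 'a mat) \<Rightarrow> (nat \<Rightarrow> 'a mat) \<Rightarrow> (nat \<Rightarrow> 'a mat) \<Rightarrow> bool" where
  "construction \<L> n q m Ls A B \<longleftrightarrow>
     (\<forall>k<m. A k \<in> carrier_mat n q \<and> B k \<in> carrier_mat n q) \<and>
     (\<forall>i<n. \<forall>j<q. Lblock \<L> n q i j = mat_lincomb n q {..<m} (\<lambda>k. conjugate (A k $$ (i,j))) Ls) \<and>
     (\<forall>k<m. Ls k = mat_lincomb n q ({..<n} \<times> {..<q}) (\<lambda>(i,j). B k $$ (i,j)) (\<lambda>(i,j). Lblock \<L> n q i j))"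

end

theory Submission
  imports Defs
begin

lemma conj_one[simp]: "conjugate (1::'a::conjugatable_field) = 1"
proof -
  have "conjugate (1::'a) * conjugate 1 = conjugate 1"
    by (metis conjugate_dist_mul mult_1_left)
  moreover have "conjugate (1::'a) \<noteq> 0" by simp
  ultimately show ?thesis by (metis mult_cancel_right2)
qed

lemma conj_mult: "conjugate ((a::'a::conjugatable_field) * b) = conjugate a * conjugate b"
  by (rule conjugate_dist_mul)

lemma conj_sum: "finite X \<Longrightarrow> conjugate (sum f X) = (\<Sum>x\<in>X. conjugate (f x :: 'a::conjugatable_field))"
  by (rule sum_conjugate)

lemma adj_dims[simp]: "dim_row (mat_adjoint M) = dim_col M" "dim_col (mat_adjoint M) = dim_row M"
  unfolding mat_adjoint_def by (auto simp: mat_of_rows_def)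

lemma adj_index[simp]: "i < dim_col M \<Longrightarrow> j < dim_row M \<Longrightarrow> mat_adjoint M $$ (i,j) = conjugate (M $$ (j,i))"
  unfolding mat_adjoint_def by (auto simp: mat_of_rows_def)

lemma mat_conj_dims[simp]: "dim_row (mat_conj M) = dim_row M" "dim_col (mat_conj M) = dim_col M"
  unfolding mat_conj_def by auto

lemma mat_conj_index[simp]: "i < dim_row M \<Longrightarrow> j < dim_col M \<Longrightarrow> mat_conj M $$ (i,j) = conjugate (M $$ (i,j))"
  unfolding mat_conj_def by auto

lemma sum_pairs_nat: "(\<Sum>x<n*q. f (x mod n, x div n)) = (\<Sum>p\<in>{..<n}\<times>{..<q}. f p)" for n q :: nat
proof -
  have 1: "fst a + snd a * n < n * q" if aI: "a \<in> {..<n}\<times>{..<(q::nat)}" for a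
  proof -
    obtain i j where a: "a = (i,j)" "i < n" "j < q" using aI by blast
    have "i + j*n < n + j*n" using a by simp
    also have "\<dots> = (Suc j) * n" by simp
    also have "\<dots> \<le> q * n" using a by (intro mult_le_mono1) simp
    finally show ?thesis using a by (simp add: mult.commute)
  qed
  have 2: "((fst a + snd a * n) mod n, (fst a + snd a * n) div n) = a" if aI: "a \<in> {..<n}\<times>{..<(q::nat)}" for a
    using that by auto
  have 3: "(x mod n, x div n) \<in> {..<n}\<times>{..<q}" if x: "x \<in> {..<n*(q::nat)}" for x
  proof -
    from x have n: "n > 0" by (cases n) auto
    show ?thesis using x n by (auto simp: div_less_iff_less_mult mult.commute)
  qed
  show ?thesis
    by (rule sum.reindex_bij_witness[where i="\<lambda>p. fst p + snd p*n" and j="\<lambda>x. (x mod n, x div n)"])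
      (use 1 2 3 in auto)
qed

lemma unit_mat_adj: "a < q \<Longrightarrow> b < q \<Longrightarrow> mat_adjoint (unit_mat q a b :: 'a::conjugatable_field mat) = unit_mat q b a"
  by (rule eq_matI) (auto simp: unit_mat_def)

definition Ind :: "nat \<Rightarrow> nat \<Rightarrow> nat \<Rightarrow> (nat \<Rightarrow> 'a::comm_ring_1 mat) \<Rightarrow> bool" where
  "Ind n q m X \<longleftrightarrow> (\<forall>c. (\<forall>p\<in>{..<n}\<times>{..<q}. (\<Sum>k<m. c k * X k $$ p) = 0) \<longrightarrow> (\<forall>k<m. c k = 0))"

definition GG :: "nat \<Rightarrow> nat \<Rightarrow> (nat \<Rightarrow> 'a::conjugatable_field mat) \<Rightarrow> (nat \<Rightarrow> 'a mat) \<Rightarrow> nat \<Rightarrow> nat \<Rightarrow> 'a" where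
  "GG n q X Y k l = (\<Sum>p\<in>{..<n}\<times>{..<q}. X k $$ p * conjugate (Y l $$ p))"

locale cons =
  fixes L :: "'a::conjugatable_field mat \<Rightarrow> 'a mat" and n q m :: nat and Ls A B :: "nat \<Rightarrow> 'a mat"
  assumes starlin: "star_linear L n q"
    and constr: "construction L n q m Ls A B"
    and Lcarr: "\<forall>k<m. Ls k \<in> carrier_mat n q"
begin

abbreviation "II \<equiv> {..<n}\<times>{..<q}"
abbreviation "Lb p \<equiv> Lblock L n q (fst p) (snd p)"

lemma Lcar: "V \<in> carrier_mat q q \<Longrightarrow> L V \<in> carrier_mat n n"
  using starlin unfolding star_linear_def by auto

lemma unit_car: "unit_mat q a b \<in> carrier_mat q q" unfolding unit_mat_def by auto

lemma Lblock_entry: assumes "i<n" "j<q" "r<n" "s<q"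
  shows "Lblock L n q i j $$ (r,s) = L (unit_mat q s j) $$ (r,i)"
proof -
  have c: "L (unit_mat q s j) \<in> carrier_mat n n" by (rule Lcar[OF unit_car])
  have 1: "i*n + r < n*n"
  proof -
    have "i*n+r < n + i*n" using assms by simp
    also have "\<dots> = Suc i * n" by simp
    also have "\<dots> \<le> n * n" using assms by (intro mult_le_mono1) simp
    finally show ?thesis .
  qed
  have 2: "j*q + s < q*q"
  proof -
    have "j*q+s < q + j*q" using assms by simp
    also have "\<dots> = Suc j * q" by simp
    also have "\<dots> \<le> q * q" using assms by (intro mult_le_mono1) simp
    finally show ?thesis .
  qed
  have m: "(i*n+r) mod n = r" "(i*n+r) div n = i" "(j*q+s) mod q = s" "(j*q+s) div q = j" using assms by auto
  show ?thesis unfolding Lblock_def matricization_def vecc_def using assms 1 2 c m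
    by (simp add: mult.commute)
qed

lemma Lb_entry: "p \<in> II \<Longrightarrow> p' \<in> II \<Longrightarrow> Lb p $$ p' = L (unit_mat q (snd p') (snd p)) $$ (fst p', fst p)"
  using Lblock_entry by (cases p; cases p') auto

lemma Herm: assumes "p \<in> II" "p' \<in> II" shows "Lb p $$ p' = conjugate (Lb p' $$ p)"
proof -
  obtain i j r s where pp: "p = (i,j)" "p' = (r,s)" "i<n" "j<q" "r<n" "s<q" using assms by auto
  have c: "L (unit_mat q j s) \<in> carrier_mat n n" by (rule Lcar[OF unit_car])
  have "L (unit_mat q s j) = L (mat_adjoint (unit_mat q j s))" using pp unit_mat_adj by metis
  also have "\<dots> = mat_adjoint (L (unit_mat q j s))" using starlin unit_car unfolding star_linear_def by blast
  finally show ?thesis using pp c by (simp add: Lblock_entry)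
qed

lemma choi_entry: assumes "x < q*n" "y < q*n"
  shows "choi L n q $$ (x,y) = Lb (y mod n, y div n) $$ (x mod n, x div n)"
proof -
  have n: "n > 0" using assms by (cases n) auto
  have "x div n < q" "y div n < q" using assms n by (auto simp: div_less_iff_less_mult)
  then show ?thesis using assms n unfolding choi_def by (simp add: Lblock_entry)
qed

lemma C1: assumes "p \<in> II" "p' \<in> II" shows "Lb p $$ p' = (\<Sum>k<m. conjugate (A k $$ p) * Ls k $$ p')"
proof -
  obtain i j r s where pp: "p = (i,j)" "p' = (r,s)" "i<n" "j<q" "r<n" "s<q" using assms by auto
  have "Lblock L n q i j = mat_lincomb n q {..<m} (\<lambda>k. conjugate (A k $$ (i,j))) Ls"
    using constr pp unfolding construction_def by blast
  then show ?thesis using pp unfolding mat_lincomb_def by simp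
qed

lemma C2: assumes "k < m" "p' \<in> II" shows "Ls k $$ p' = (\<Sum>p\<in>II. B k $$ p * Lb p $$ p')"
proof -
  obtain r s where pp: "p' = (r,s)" "r<n" "s<q" using assms by auto
  have "Ls k = mat_lincomb n q II (\<lambda>(i,j). B k $$ (i,j)) (\<lambda>(i,j). Lblock L n q i j)"
    using constr assms unfolding construction_def by blast
  then have "Ls k $$ p' = (\<Sum>x\<in>II. (case x of (i,j) \<Rightarrow> B k $$ (i,j)) * (case x of (i,j) \<Rightarrow> Lblock L n q i j) $$ (r,s))"
    using pp unfolding mat_lincomb_def by simp
  also have "\<dots> = (\<Sum>p\<in>II. B k $$ p * Lb p $$ p')"
    using pp by (intro sum.cong) auto
  finally show ?thesis .
qed

lemma Acarr: "k < m \<Longrightarrow> A k \<in> carrier_mat n q" and Bcarr: "k < m \<Longrightarrow> B k \<in> carrier_mat n q"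
  using constr unfolding construction_def by auto

end


lemma sum_swap_gen: "(\<Sum>p\<in>P. b p * (\<Sum>l\<in>S. f l p * g l)) = (\<Sum>l\<in>S. (\<Sum>p\<in>P. b p * f l p) * g l)"
  for b :: "'b \<Rightarrow> 'a::comm_ring_1"
  by (simp add: sum_distrib_left sum_distrib_right ac_simps) (rule sum.swap)

lemma Ind_uniq: assumes "Ind n q m X" "\<forall>p\<in>{..<n}\<times>{..<q}. (\<Sum>k<m. c k * X k $$ p) = (\<Sum>k<m. d k * X k $$ p)" "k < m"
  shows "c k = d k"
proof -
  have "\<forall>p\<in>{..<n}\<times>{..<q}. (\<Sum>k<m. (c k - d k) * X k $$ p) = 0"
    using assms(2) by (simp add: left_diff_distrib sum_subtractf)
  then have "c k - d k = 0" using assms(1)[unfolded Ind_def, rule_format, of "\<lambda>k. c k - d k"] assms(3) by blast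
  then show ?thesis by simp
qed

lemma sum_delta_mult: "k < (m::nat) \<Longrightarrow> (\<Sum>j<m. (if j = k then 1 else 0) * f j) = (f k :: 'a::comm_ring_1)"
proof -
  assume k: "k < m"
  have "(\<Sum>j<m. (if j = k then 1 else 0) * f j) = (\<Sum>j<m. if j = k then f j else 0)"
    by (rule sum.cong) auto
  then show ?thesis using k by simp
qed

context cons begin

lemma Sym: assumes "p \<in> II" "p' \<in> II" shows "Lb p $$ p' = (\<Sum>k<m. A k $$ p' * conjugate (Ls k $$ p))"
  using Herm[OF assms] C1[OF assms(2,1)] by (simp add: sum_conjugate conjugate_dist_mul)

end

locale two = c: cons L n q m Ls A B + d: cons L n q m Ls' A' B'
  for L :: "'a::conjugatable_field mat \<Rightarrow> 'a mat" and n q m Ls A B Ls' A' B'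
begin

lemma X1: assumes "k < m" "p' \<in> c.II" shows "Ls k $$ p' = (\<Sum>j<m. GG n q B A' k j * Ls' j $$ p')"
proof -
  have "Ls k $$ p' = (\<Sum>p\<in>c.II. B k $$ p * (\<Sum>j<m. conjugate (A' j $$ p) * Ls' j $$ p'))"
    unfolding c.C2[OF assms] using d.C1 assms by (intro sum.cong) auto
  also have "\<dots> = (\<Sum>j<m. GG n q B A' k j * Ls' j $$ p')"
    unfolding sum_swap_gen GG_def ..
  finally show ?thesis .
qed

lemma X2: assumes "k < m" "p' \<in> c.II" shows "Ls k $$ p' = (\<Sum>j<m. GG n q B Ls' k j * A' j $$ p')"
proof -
  have "Ls k $$ p' = (\<Sum>p\<in>c.II. B k $$ p * (\<Sum>j<m. conjugate (Ls' j $$ p) * A' j $$ p'))"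
    unfolding c.C2[OF assms] using d.Sym assms by (intro sum.cong) (auto simp: mult.commute)
  also have "\<dots> = (\<Sum>j<m. GG n q B Ls' k j * A' j $$ p')"
    unfolding sum_swap_gen GG_def ..
  finally show ?thesis .
qed

lemma X4: assumes "k < m" "j < m" shows "conjugate (GG n q B Ls' k j) = GG n q B' Ls j k"
proof -
  have "conjugate (GG n q B Ls' k j) = (\<Sum>p\<in>c.II. conjugate (B k $$ p) * Ls' j $$ p)"
    unfolding GG_def by (simp add: sum_conjugate conjugate_dist_mul)
  also have "\<dots> = (\<Sum>p\<in>c.II. conjugate (B k $$ p) * (\<Sum>p'\<in>c.II. B' j $$ p' * c.Lb p' $$ p))"
    using d.C2 assms by (intro sum.cong) auto
  also have "\<dots> = (\<Sum>p\<in>c.II. \<Sum>p'\<in>c.II. conjugate (B k $$ p) * B' j $$ p' * c.Lb p' $$ p)"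
    by (simp add: sum_distrib_left mult.assoc)
  also have "\<dots> = (\<Sum>p'\<in>c.II. \<Sum>p\<in>c.II. conjugate (B k $$ p) * B' j $$ p' * c.Lb p' $$ p)"
    by (rule sum.swap)
  also have "\<dots> = (\<Sum>p'\<in>c.II. B' j $$ p' * (\<Sum>p\<in>c.II. conjugate (B k $$ p) * conjugate (c.Lb p $$ p')))"
  proof (rule sum.cong[OF refl])
    fix p' assume p': "p' \<in> c.II"
    have "(\<Sum>p\<in>c.II. conjugate (B k $$ p) * B' j $$ p' * c.Lb p' $$ p)
       = (\<Sum>p\<in>c.II. B' j $$ p' * (conjugate (B k $$ p) * conjugate (c.Lb p $$ p')))"
    proof (rule sum.cong[OF refl])
      fix p assume p: "p \<in> c.II"
      have "c.Lb p' $$ p = conjugate (c.Lb p $$ p')" by (rule c.Herm[OF p' p])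
      then show "conjugate (B k $$ p) * B' j $$ p' * c.Lb p' $$ p = B' j $$ p' * (conjugate (B k $$ p) * conjugate (c.Lb p $$ p'))"
        by (simp only: ac_simps)
    qed
    then show "(\<Sum>p\<in>c.II. conjugate (B k $$ p) * B' j $$ p' * c.Lb p' $$ p) = B' j $$ p' * (\<Sum>p\<in>c.II. conjugate (B k $$ p) * conjugate (c.Lb p $$ p'))"
      by (simp add: sum_distrib_left)
  qed
  also have "\<dots> = (\<Sum>p'\<in>c.II. B' j $$ p' * conjugate (Ls k $$ p'))"
    using c.C2 assms by (intro sum.cong) (auto simp: sum_conjugate conjugate_dist_mul)
  also have "\<dots> = GG n q B' Ls j k" unfolding GG_def ..
  finally show ?thesis .
qed

end


lemma pair_in: "x < n*q \<Longrightarrow> (x mod n, x div n) \<in> {..<n}\<times>{..<q}" for n q x :: nat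
proof -
  assume x: "x < n*q"
  then have n: "n > 0" by (cases n) auto
  show ?thesis using x n by (auto simp: div_less_iff_less_mult mult.commute)
qed

lemma pair_surj: "p \<in> {..<n}\<times>{..<q} \<Longrightarrow> \<exists>x<n*q. p = (x mod n, x div n)" for n q :: nat
proof -
  assume p: "p \<in> {..<n}\<times>{..<q}"
  obtain i j where a: "p = (i,j)" "i < n" "j < q" using p by blast
  have "i + j*n < n + j*n" using a by simp
  also have "\<dots> = (Suc j) * n" by simp
  also have "\<dots> \<le> q * n" using a by (intro mult_le_mono1) simp
  finally have "i + j*n < n*q" by (simp add: mult.commute)
  moreover have "p = ((i+j*n) mod n, (i+j*n) div n)" using a by simp
  ultimately show ?thesis by blast
qed

lemma hat_carrier: "hat_mat m n q X \<in> carrier_mat m (n*q)" unfolding hat_mat_def by auto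

lemma hat_index: assumes "X k \<in> carrier_mat n q" "k < m" "x < n*q"
  shows "hat_mat m n q X $$ (k,x) = conjugate (X k $$ (x mod n, x div n))"
proof -
  have "(x mod n, x div n) \<in> {..<n}\<times>{..<q}" by (rule pair_in[OF assms(3)])
  then show ?thesis using assms unfolding hat_mat_def vecc_def by auto
qed

lemma ones_form_sum: assumes "X \<in> carrier_mat n q"
  shows "ones_form X = (\<Sum>p\<in>{..<n}\<times>{..<q}. X $$ p)"
proof -
  have "ones_form X = (\<Sum>i<n. \<Sum>j<q. X $$ (i,j))"
    using assms unfolding ones_form_def ones_vec_def
    by (simp add: scalar_prod_def lessThan_atLeast0)
  also have "\<dots> = (\<Sum>p\<in>{..<n}\<times>{..<q}. X $$ p)"
    by (simp add: sum.cartesian_product)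
  finally show ?thesis .
qed

lemma gram_carrier: "gram_form m X Y \<in> carrier_mat m m" unfolding gram_form_def by auto

lemma gram_index: assumes "X k \<in> carrier_mat n q" "Y l \<in> carrier_mat n q" "k < m" "l < m"
  shows "gram_form m X Y $$ (k,l) = GG n q X Y k l"
proof -
  have h: "hadamard (X k) (mat_conj (Y l)) \<in> carrier_mat n q" using assms unfolding hadamard_def by auto
  have "gram_form m X Y $$ (k,l) = (\<Sum>p\<in>{..<n}\<times>{..<q}. hadamard (X k) (mat_conj (Y l)) $$ p)"
    using assms ones_form_sum[OF h] unfolding gram_form_def by simp
  also have "\<dots> = GG n q X Y k l" unfolding GG_def using assms
    by (intro sum.cong) (auto simp: hadamard_def)
  finally show ?thesis .
qed

lemma mat_mult_entries: assumes "M1 \<in> carrier_mat a b" "M2 \<in> carrier_mat b c" "R \<in> carrier_mat a c"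
  "\<And>i j. i < a \<Longrightarrow> j < c \<Longrightarrow> R $$ (i,j) = (\<Sum>k<b. M1 $$ (i,k) * M2 $$ (k,j))"
  shows "R = M1 * M2"
  using assms by (intro eq_matI) (auto simp: scalar_prod_def lessThan_atLeast0)

lemma hat_lemma: assumes X: "\<forall>k<m. X k \<in> carrier_mat n q" and Y: "\<forall>k<m. Y k \<in> carrier_mat n q"
  and M: "M \<in> carrier_mat m m"
  and e: "\<And>k p. k < m \<Longrightarrow> p \<in> {..<n}\<times>{..<q} \<Longrightarrow> X k $$ p = (\<Sum>l<m. conjugate (M $$ (k,l)) * Y l $$ p)"
  shows "hat_mat m n q X = M * hat_mat m n q Y"
proof (rule mat_mult_entries[OF M hat_carrier hat_carrier])
  fix k x assume k: "k < m" and x: "x < n*q"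
  have p: "(x mod n, x div n) \<in> {..<n}\<times>{..<q}" by (rule pair_in[OF x])
  have "hat_mat m n q X $$ (k,x) = conjugate (\<Sum>l<m. conjugate (M $$ (k,l)) * Y l $$ (x mod n, x div n))"
    using hat_index[of X k n q m x] X k x e[OF k p] by (simp only: )
  also have "\<dots> = (\<Sum>l<m. M $$ (k,l) * hat_mat m n q Y $$ (l,x))"
    unfolding sum_conjugate[OF finite_lessThan] conjugate_dist_mul conjugate_id
  proof (rule sum.cong[OF refl])
    fix l assume l: "l \<in> {..<m}"
    then have "hat_mat m n q Y $$ (l,x) = conjugate (Y l $$ (x mod n, x div n))"
      using hat_index[of Y l n q m x] Y x by simp
    then show "M $$ (k, l) * conjugate (Y l $$ (x mod n, x div n)) = M $$ (k, l) * hat_mat m n q Y $$ (l, x)" by simp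
  qed
  finally show "hat_mat m n q X $$ (k,x) = (\<Sum>l<m. M $$ (k,l) * hat_mat m n q Y $$ (l,x))" .
qed

lemma Ind_coef: assumes "Ind n q m X" "k < m" "r < m"
  "\<forall>p\<in>{..<n}\<times>{..<q}. X k $$ p = (\<Sum>j<m. c j * X j $$ p)"
  shows "c r = (if r = k then 1 else 0)"
  using Ind_uniq[OF assms(1) _ assms(3), of c "\<lambda>j. if j = k then 1 else 0"] assms(2,4)
  by (simp add: sum_delta_mult)

lemma Ind_from_GG: assumes I: "\<And>k j. k < m \<Longrightarrow> j < m \<Longrightarrow> GG n q B A k j = (if j = k then 1 else 0)"
  shows "Ind n q m A"
  unfolding Ind_def
proof (intro allI impI)
  fix c k assume h: "\<forall>p\<in>{..<n}\<times>{..<q}. (\<Sum>k<m. c k * A k $$ p) = 0" and k: "k < m"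
  have "0 = (\<Sum>p\<in>{..<n}\<times>{..<q}. B k $$ p * conjugate (\<Sum>j<m. c j * A j $$ p))"
    by (rule sym, rule sum.neutral) (use h in auto)
  also have "\<dots> = (\<Sum>p\<in>{..<n}\<times>{..<q}. B k $$ p * (\<Sum>j<m. conjugate (A j $$ p) * conjugate (c j)))"
    by (simp add: sum_conjugate conjugate_dist_mul mult.commute)
  also have "\<dots> = (\<Sum>j<m. GG n q B A k j * conjugate (c j))"
    unfolding sum_swap_gen GG_def ..
  also have "\<dots> = (\<Sum>j<m. (if j = k then 1 else 0) * conjugate (c j))"
    using I k by (intro sum.cong) auto
  also have "\<dots> = conjugate (c k)" using k by (rule sum_delta_mult)
  finally show "c k = 0" by simp
qed


lemma (in cons) self_two: "two L n q m Ls A B Ls A B"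
proof -
  have "cons L n q m Ls A B" by (rule cons.intro) (rule starlin constr Lcarr)+
  then show ?thesis unfolding two_def by simp
qed

context cons begin

lemma F1: assumes "k < m" "p' \<in> II" shows "Ls k $$ p' = (\<Sum>j<m. GG n q B Ls k j * A j $$ p')"
proof -
  interpret s: two L n q m Ls A B Ls A B by (rule self_two)
  show ?thesis by (rule s.X2[OF assms])
qed

lemma F4: assumes "k < m" "j < m" shows "GG n q B Ls k j = conjugate (GG n q B Ls j k)"
proof -
  interpret s: two L n q m Ls A B Ls A B by (rule self_two)
  show ?thesis using s.X4[OF assms(2,1)] by simp
qed

lemma F2: assumes I: "Ind n q m Ls" and "k < m" "j < m" shows "GG n q B A k j = (if j = k then 1 else 0)"
proof -
  interpret s: two L n q m Ls A B Ls A B by (rule self_two)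
  show ?thesis using Ind_coef[OF I assms(2,3), of "GG n q B A k"] s.X1[OF assms(2)] by blast
qed

lemma F3: assumes I: "Ind n q m Ls" shows "Ind n q m A"
  by (rule Ind_from_GG[of m n q B]) (rule F2[OF I])

end

context two begin

lemma X3: assumes I: "Ind n q m Ls'" and j: "j < m" and p: "p \<in> c.II"
  shows "A' j $$ p = (\<Sum>k<m. A k $$ p * conjugate (GG n q B A' k j))"
proof -
  have "\<forall>p'\<in>c.II. (\<Sum>j<m. conjugate (A' j $$ p) * Ls' j $$ p') = (\<Sum>j<m. (\<Sum>k<m. conjugate (A k $$ p) * GG n q B A' k j) * Ls' j $$ p')"
  proof
    fix p' assume p': "p' \<in> c.II"
    have "(\<Sum>j<m. conjugate (A' j $$ p) * Ls' j $$ p') = c.Lb p $$ p'" using d.C1[OF p p'] by simp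
    also have "\<dots> = (\<Sum>k<m. conjugate (A k $$ p) * Ls k $$ p')" using c.C1[OF p p'] .
    also have "\<dots> = (\<Sum>k<m. conjugate (A k $$ p) * (\<Sum>j<m. GG n q B A' k j * Ls' j $$ p'))"
      using X1 p' by (intro sum.cong) auto
    also have "\<dots> = (\<Sum>j<m. (\<Sum>k<m. conjugate (A k $$ p) * GG n q B A' k j) * Ls' j $$ p')"
      unfolding sum_swap_gen ..
    finally show "(\<Sum>j<m. conjugate (A' j $$ p) * Ls' j $$ p') = (\<Sum>j<m. (\<Sum>k<m. conjugate (A k $$ p) * GG n q B A' k j) * Ls' j $$ p')" .
  qed
  from Ind_uniq[OF I this j]
  have "conjugate (A' j $$ p) = (\<Sum>k<m. conjugate (A k $$ p) * GG n q B A' k j)" .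
  then have "A' j $$ p = conjugate (\<Sum>k<m. conjugate (A k $$ p) * GG n q B A' k j)"
    by (metis conjugate_id)
  then show ?thesis by (simp add: sum_conjugate conjugate_dist_mul)
qed

lemma X11: assumes I: "Ind n q m Ls" and h: "\<forall>j<m. (\<Sum>k<m. c k * GG n q B Ls' k j) = 0" and k: "k < m"
  shows "c k = 0"
proof -
  have "\<forall>p'\<in>c.II. (\<Sum>k<m. c k * Ls k $$ p') = 0"
  proof
    fix p' assume p': "p' \<in> c.II"
    have "(\<Sum>k<m. c k * Ls k $$ p') = (\<Sum>k<m. c k * (\<Sum>j<m. GG n q B Ls' k j * A' j $$ p'))"
      using X2 p' by (intro sum.cong) auto
    also have "\<dots> = (\<Sum>j<m. (\<Sum>k<m. c k * GG n q B Ls' k j) * A' j $$ p')"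
      unfolding sum_swap_gen ..
    also have "\<dots> = 0" using h by simp
    finally show "(\<Sum>k<m. c k * Ls k $$ p') = 0" .
  qed
  then show ?thesis using I k unfolding Ind_def by blast
qed

lemma X10: assumes I: "Ind n q m Ls"
  and h: "\<forall>j<m. \<forall>p'\<in>c.II. Ls' j $$ p' = (\<Sum>r<m. Psi j r * Ls r $$ p')"
  and k: "k < m" and r: "r < m"
  shows "(\<Sum>j<m. GG n q B A' k j * Psi j r) = (if r = k then 1 else 0)"
proof -
  have "\<forall>p'\<in>c.II. Ls k $$ p' = (\<Sum>r<m. (\<Sum>j<m. GG n q B A' k j * Psi j r) * Ls r $$ p')"
  proof
    fix p' assume p': "p' \<in> c.II"
    have "Ls k $$ p' = (\<Sum>j<m. GG n q B A' k j * Ls' j $$ p')" by (rule X1[OF k p'])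
    also have "\<dots> = (\<Sum>j<m. GG n q B A' k j * (\<Sum>r<m. Psi j r * Ls r $$ p'))"
      using h p' by (intro sum.cong) auto
    also have "\<dots> = (\<Sum>r<m. (\<Sum>j<m. GG n q B A' k j * Psi j r) * Ls r $$ p')"
      unfolding sum_swap_gen ..
    finally show "Ls k $$ p' = (\<Sum>r<m. (\<Sum>j<m. GG n q B A' k j * Psi j r) * Ls r $$ p')" .
  qed
  from Ind_coef[OF I k r this] show ?thesis .
qed

lemma X6: assumes k: "k < m" and j: "j < m"
  shows "GG n q B Ls' k j = (\<Sum>r<m. GG n q B A' k r * GG n q B' Ls' r j)"
proof -
  have "GG n q B Ls' k j = (\<Sum>p\<in>c.II. B k $$ p * conjugate (Ls' j $$ p))" by (simp only: GG_def)
  also have "\<dots> = (\<Sum>p\<in>c.II. B k $$ p * conjugate (\<Sum>r<m. GG n q B' Ls' j r * A' r $$ p))"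
    by (rule sum.cong[OF refl]) (use d.F1[OF j] in simp)
  also have "\<dots> = (\<Sum>p\<in>c.II. B k $$ p * (\<Sum>r<m. conjugate (A' r $$ p) * conjugate (GG n q B' Ls' j r)))"
    by (simp add: sum_conjugate conjugate_dist_mul mult.commute)
  also have "\<dots> = (\<Sum>r<m. GG n q B A' k r * conjugate (GG n q B' Ls' j r))"
    unfolding sum_swap_gen GG_def ..
  also have "\<dots> = (\<Sum>r<m. GG n q B A' k r * GG n q B' Ls' r j)"
  proof (rule sum.cong[OF refl])
    fix r assume "r \<in> {..<m}"
    then show "GG n q B A' k r * conjugate (GG n q B' Ls' j r) = GG n q B A' k r * GG n q B' Ls' r j"
      using d.F4[of r j] j by simp
  qed
  finally show ?thesis .
qed

lemma X7: assumes k: "k < m" and j: "j < m"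
  shows "GG n q B Ls k j = (\<Sum>r<m. GG n q B A' k r * conjugate (GG n q B Ls' j r))"
proof -
  have "GG n q B Ls k j = (\<Sum>p\<in>c.II. B k $$ p * conjugate (Ls j $$ p))" by (simp only: GG_def)
  also have "\<dots> = (\<Sum>p\<in>c.II. B k $$ p * conjugate (\<Sum>r<m. GG n q B Ls' j r * A' r $$ p))"
    by (rule sum.cong[OF refl]) (use X2[OF j] in simp)
  also have "\<dots> = (\<Sum>p\<in>c.II. B k $$ p * (\<Sum>r<m. conjugate (A' r $$ p) * conjugate (GG n q B Ls' j r)))"
    by (simp add: sum_conjugate conjugate_dist_mul mult.commute)
  also have "\<dots> = (\<Sum>r<m. GG n q B A' k r * conjugate (GG n q B Ls' j r))"
    unfolding sum_swap_gen GG_def ..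
  finally show ?thesis .
qed

end

lemma (in vec_space) rank_mult_le:
  assumes P: "P \<in> carrier_mat n nc" and Q: "Q \<in> carrier_mat nc k"
  shows "rank (P * Q) \<le> rank P"
proof -
  define S where "S = set (cols P)"
  have Sc: "S \<subseteq> carrier_vec n" unfolding S_def using P cols_dim by blast
  have PQ: "P * Q \<in> carrier_mat n k" using P Q by auto
  have sub: "set (cols (P*Q)) \<subseteq> span S"
  proof
    fix v assume "v \<in> set (cols (P*Q))"
    then obtain j where j: "j < dim_col (P*Q)" "v = col (P*Q) j" by (metis cols_length cols_nth in_set_conv_nth)
    then have "v = P *\<^sub>v col Q j" using col_mult2[OF P Q, of j] Q by simp
    moreover have "col Q j \<in> carrier_vec (dim_col P)" using P Q j by auto
    ultimately have "v \<in> col_space P" using P unfolding col_space_eq[OF P] by auto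
    then show "v \<in> span S" unfolding col_space_def S_def .
  qed
  have vs: "vectorspace class_ring (vs (span S))" using span_is_subspace[THEN subspace_is_vs, OF Sc] by auto
  have sm: "submodule class_ring (span S) V" using Sc by (simp add: span_is_submodule)
  have "VectorSpace.subspace class_ring (span (set (cols (P*Q)))) (vs (span S))"
    using vectorspace.span_is_subspace[OF vs, of "set (cols (P*Q))", unfolded
      span_li_not_depend(1)[OF sub sm]] sub by auto
  moreover have fin_dim: "vectorspace.fin_dim class_ring (vs (span S))"
       "vectorspace.fin_dim class_ring (vs (span S)\<lparr>carrier := span (set (cols (P*Q)))\<rparr>)"
    using fin_dim_span_cols P PQ unfolding S_def by auto
  ultimately show ?thesis unfolding rank_def S_def
    using vectorspace.subspace_dim[OF vs[unfolded S_def]] fin_dim unfolding S_def by auto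
qed

lemma (in vec_space) rank_lt_of_kernel:
  assumes P: "P \<in> carrier_mat n nc" and v: "v \<in> carrier_vec nc" "v \<noteq> 0\<^sub>v nc" "P *\<^sub>v v = 0\<^sub>v n"
  shows "rank P < nc"
proof (rule ccontr)
  assume "\<not> rank P < nc"
  then have r: "rank P = nc" using rank_le_nc[OF P] by auto
  show False
  proof (cases "distinct (cols P)")
    case True
    then show False using full_rank_lin_indpt[OF P r True] lin_depI[OF P v True] by blast
  next
    case False
    obtain S where S: "maximal S (\<lambda>T. T \<subseteq> set (cols P) \<and> lin_indpt T)"
      using maximal_exists[of "(\<lambda>T. T \<subseteq> set (cols P) \<and> lin_indpt T)" "card (set (cols P))" "{}"]
      by (meson List.finite_set card_mono empty_iff empty_subsetI finite_lin_indpt2 rev_finite_subset)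
    then have "card S \<le> card (set (cols P))" by (simp add: card_mono maximal_def)
    moreover have "card (set (cols P)) < length (cols P)"
      using False card_distinct card_length le_neq_implies_less by blast
    ultimately have "card S < nc" using P by auto
    then show False using rank_card_indpt[OF P S] r by simp
  qed
qed


lemma ker_eq: assumes C: "C \<in> carrier_mat (n*q) (n*q)" and M: "M \<in> carrier_mat m (n*q)"
  and e: "\<And>x y. x < n*q \<Longrightarrow> y < n*q \<Longrightarrow> C $$ (x,y) = (\<Sum>k<m. F k $$ (x mod n, x div n) * M $$ (k,y))"
  and I: "Ind n q m F"
  shows "mat_kernel C = mat_kernel M"
proof -
  have key: "(C *\<^sub>v v) $ x = (\<Sum>k<m. (M *\<^sub>v v) $ k * F k $$ (x mod n, x div n))"
    if v: "v \<in> carrier_vec (n*q)" and x: "x < n*q" for v x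
  proof -
    have "(C *\<^sub>v v) $ x = (\<Sum>y<n*q. C $$ (x,y) * v $ y)"
      using C v x by (simp add: scalar_prod_def lessThan_atLeast0)
    also have "\<dots> = (\<Sum>y<n*q. (\<Sum>k<m. F k $$ (x mod n, x div n) * M $$ (k,y)) * v $ y)"
      using e x by (intro sum.cong) auto
    also have "\<dots> = (\<Sum>y<n*q. \<Sum>k<m. F k $$ (x mod n, x div n) * (M $$ (k,y) * v $ y))"
      by (simp add: sum_distrib_right mult.assoc)
    also have "\<dots> = (\<Sum>k<m. \<Sum>y<n*q. F k $$ (x mod n, x div n) * (M $$ (k,y) * v $ y))"
      by (rule sum.swap)
    also have "\<dots> = (\<Sum>k<m. (M *\<^sub>v v) $ k * F k $$ (x mod n, x div n))"
    proof (rule sum.cong[OF refl])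
      fix k assume k: "k \<in> {..<m}"
      have "(M *\<^sub>v v) $ k = (\<Sum>y<n*q. M $$ (k,y) * v $ y)"
        using M v k by (simp add: scalar_prod_def lessThan_atLeast0)
      then show "(\<Sum>y<n*q. F k $$ (x mod n, x div n) * (M $$ (k,y) * v $ y)) = (M *\<^sub>v v) $ k * F k $$ (x mod n, x div n)"
        by (simp add: sum_distrib_left mult.commute)
    qed
    finally show ?thesis .
  qed
  show ?thesis
  proof (rule Set.set_eqI)
    fix v
    show "v \<in> mat_kernel C \<longleftrightarrow> v \<in> mat_kernel M"
    proof
      assume "v \<in> mat_kernel C"
      then have v: "v \<in> carrier_vec (n*q)" and Cv: "C *\<^sub>v v = 0\<^sub>v (n*q)" using C M unfolding mat_kernel_def by auto
      have "\<forall>p\<in>{..<n}\<times>{..<q}. (\<Sum>k<m. (M *\<^sub>v v) $ k * F k $$ p) = 0"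
      proof
        fix p assume "p \<in> {..<n}\<times>{..<q}"
        then obtain x where x: "x < n*q" "p = (x mod n, x div n)" using pair_surj by blast
        have "(C *\<^sub>v v) $ x = 0" using Cv x by simp
        then show "(\<Sum>k<m. (M *\<^sub>v v) $ k * F k $$ p) = 0" using key[OF v x(1)] x by simp
      qed
      then have "\<forall>k<m. (M *\<^sub>v v) $ k = 0" using I unfolding Ind_def by blast
      then have "M *\<^sub>v v = 0\<^sub>v m" using M by (intro eq_vecI) auto
      then show "v \<in> mat_kernel M" using v M unfolding mat_kernel_def by auto
    next
      assume "v \<in> mat_kernel M"
      then have v: "v \<in> carrier_vec (n*q)" and Mv: "M *\<^sub>v v = 0\<^sub>v m" using M unfolding mat_kernel_def by auto
      have "C *\<^sub>v v = 0\<^sub>v (n*q)"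
      proof (rule eq_vecI)
        fix x assume "x < dim_vec (0\<^sub>v (n*q) :: 'a vec)"
        then have x: "x < n*q" by simp
        show "(C *\<^sub>v v) $ x = 0\<^sub>v (n*q) $ x" using key[OF v x] Mv x by simp
      qed (use C in simp)
      then show "v \<in> mat_kernel C" using v C unfolding mat_kernel_def by auto
    qed
  qed
qed

lemma inv_left: assumes M: "M \<in> carrier_mat m m"
  and h: "\<forall>c. (\<forall>j<m. (\<Sum>k<m. c k * M $$ (k,j)) = 0) \<longrightarrow> (\<forall>k<m. c k = 0)"
  shows "invertible_mat (M :: 'a :: field mat)"
proof -
  have Mt: "transpose_mat M \<in> carrier_mat m m" using M by simp
  have "det (transpose_mat M) \<noteq> 0"
  proof
    assume "det (transpose_mat M) = 0"
    then obtain v where v: "v \<in> carrier_vec m" "v \<noteq> 0\<^sub>v m" "transpose_mat M *\<^sub>v v = 0\<^sub>v m"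
      using det_0_iff_vec_prod_zero_field[OF Mt] by blast
    have "\<forall>j<m. (\<Sum>k<m. v $ k * M $$ (k,j)) = 0"
    proof (intro allI impI)
      fix j assume j: "j < m"
      have "(transpose_mat M *\<^sub>v v) $ j = 0" using v(3) j by simp
      then show "(\<Sum>k<m. v $ k * M $$ (k,j)) = 0"
        using M v(1) j by (simp add: scalar_prod_def lessThan_atLeast0 mult.commute)
    qed
    then have "\<forall>k<m. v $ k = 0" using h by blast
    then have "v = 0\<^sub>v m" using v(1) by (intro eq_vecI) auto
    then show False using v(2) by simp
  qed
  then have "det M \<noteq> 0" using det_transpose[OF M] by simp
  from det_non_zero_imp_unit[OF M this, of "()"]
  obtain B where "B \<in> carrier_mat m m" "M * B = 1\<^sub>m m" "B * M = 1\<^sub>m m"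
    unfolding Units_def ring_mat_def by auto
  then show ?thesis using M unfolding invertible_mat_def inverts_mat_def by auto
qed

context cons begin

lemma choi_carrier: "choi L n q \<in> carrier_mat (n*q) (n*q)"
  unfolding choi_def by (simp add: mult.commute)

lemma choi_factor:
  "choi L n q = mat (q*n) m (\<lambda>(x,k). Ls k $$ (x mod n, x div n)) * hat_mat m n q A"
proof (rule mat_mult_entries[of _ "q*n" m _ "n*q"])
  show "choi L n q \<in> carrier_mat (q*n) (n*q)" unfolding choi_def by (simp add: mult.commute)
  fix x y assume x: "x < q*n" and y: "y < n*q"
  have px: "(x mod n, x div n) \<in> II" using pair_in[of x n q] x by (simp add: mult.commute)
  have py: "(y mod n, y div n) \<in> II" using pair_in[of y n q] y by simp
  have "choi L n q $$ (x,y) = (\<Sum>k<m. conjugate (A k $$ (y mod n, y div n)) * Ls k $$ (x mod n, x div n))"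
    using choi_entry[OF x] y C1[OF py px] by (simp add: mult.commute)
  also have "\<dots> = (\<Sum>k<m. mat (q*n) m (\<lambda>(x,k). Ls k $$ (x mod n, x div n)) $$ (x,k) * hat_mat m n q A $$ (k,y))"
    using x y Acarr hat_index[of A _ n q m y] by (intro sum.cong) (auto simp: mult.commute)
  finally show "choi L n q $$ (x,y) = (\<Sum>k<m. mat (q*n) m (\<lambda>(x,k). Ls k $$ (x mod n, x div n)) $$ (x,k) * hat_mat m n q A $$ (k,y))" .
qed (auto simp: hat_carrier)

lemma Ind_rank: assumes r: "m = vec_space.rank (q*n) (choi L n q)" shows "Ind n q m Ls"
proof (rule ccontr)
  assume "\<not> Ind n q m Ls"
  then obtain c k where c: "\<forall>p\<in>II. (\<Sum>k<m. c k * Ls k $$ p) = 0" and k: "k < m" "c k \<noteq> 0"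
    unfolding Ind_def by blast
  define P where "P = mat (q*n) m (\<lambda>(x,k). Ls k $$ (x mod n, x div n))"
  have P: "P \<in> carrier_mat (q*n) m" unfolding P_def by simp
  define v where "v = vec m c"
  have v: "v \<in> carrier_vec m" "v \<noteq> 0\<^sub>v m"
    using k unfolding v_def by (auto simp: vec_eq_iff)
  have "P *\<^sub>v v = 0\<^sub>v (q*n)"
  proof (rule eq_vecI)
    fix x assume "x < dim_vec (0\<^sub>v (q*n) :: 'a vec)"
    then have x: "x < q*n" by simp
    have px: "(x mod n, x div n) \<in> II" using pair_in[of x n q] x by (simp add: mult.commute)
    have "(P *\<^sub>v v) $ x = (\<Sum>k<m. c k * Ls k $$ (x mod n, x div n))"
      using x unfolding P_def v_def by (simp add: scalar_prod_def lessThan_atLeast0 mult.commute)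
    then show "(P *\<^sub>v v) $ x = 0\<^sub>v (q*n) $ x" using c px x by simp
  qed (simp add: P_def)
  then have lt: "vec_space.rank (q*n) P < m" using vec_space.rank_lt_of_kernel[OF P v] by blast
  have "vec_space.rank (q*n) (choi L n q) \<le> vec_space.rank (q*n) P"
    unfolding choi_factor P_def[symmetric] by (rule vec_space.rank_mult_le[OF P hat_carrier])
  then show False using lt r by simp
qed

lemma ker_A: assumes I: "Ind n q m Ls" shows "mat_kernel (hat_mat m n q A) = mat_kernel (choi L n q)"
proof (rule sym, rule ker_eq[OF choi_carrier hat_carrier _ I])
  fix x y assume x: "x < n*q" and y: "y < n*q"
  have px: "(x mod n, x div n) \<in> II" using pair_in[OF x] .
  have py: "(y mod n, y div n) \<in> II" using pair_in[OF y] .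
  have "choi L n q $$ (x,y) = (\<Sum>k<m. conjugate (A k $$ (y mod n, y div n)) * Ls k $$ (x mod n, x div n))"
    using choi_entry x y C1[OF py px] by (simp add: mult.commute)
  also have "\<dots> = (\<Sum>k<m. Ls k $$ (x mod n, x div n) * hat_mat m n q A $$ (k,y))"
    using y Acarr hat_index[of A _ n q m y] by (intro sum.cong) (auto simp: mult.commute)
  finally show "choi L n q $$ (x,y) = (\<Sum>k<m. Ls k $$ (x mod n, x div n) * hat_mat m n q A $$ (k,y))" .
qed

lemma ker_L: assumes I: "Ind n q m A" shows "mat_kernel (hat_mat m n q Ls) = mat_kernel (choi L n q)"
proof (rule sym, rule ker_eq[OF choi_carrier hat_carrier _ I])
  fix x y assume x: "x < n*q" and y: "y < n*q"
  have px: "(x mod n, x div n) \<in> II" using pair_in[OF x] .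
  have py: "(y mod n, y div n) \<in> II" using pair_in[OF y] .
  have "choi L n q $$ (x,y) = (\<Sum>k<m. A k $$ (x mod n, x div n) * conjugate (Ls k $$ (y mod n, y div n)))"
    using choi_entry x y Sym[OF py px] by (simp add: mult.commute)
  also have "\<dots> = (\<Sum>k<m. A k $$ (x mod n, x div n) * hat_mat m n q Ls $$ (k,y))"
    using y Lcarr hat_index[of Ls _ n q m y] by (intro sum.cong) auto
  finally show "choi L n q $$ (x,y) = (\<Sum>k<m. A k $$ (x mod n, x div n) * hat_mat m n q Ls $$ (k,y))" .
qed

end

theorem theorem5p9:
  fixes \<L> :: "'a :: conjugatable_field mat \<Rightarrow> 'a mat"
    and n q m :: nat
    and Ls Ls' A B A' B' :: "nat \<Rightarrow> 'a mat"
  assumes starlin: "star_linear \<L> n q"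
    and rank: "m = vec_space.rank (q*n) (choi \<L> n q)"
    and Ls_carr: "\<forall>k<m. Ls k \<in> carrier_mat n q"
    and Ls'_carr: "\<forall>k<m. Ls' k \<in> carrier_mat n q"
    and span: "mat_span n q {..<m} Ls = mat_span n q ({..<n} \<times> {..<q}) (\<lambda>(i,j). Lblock \<L> n q i j)"
    and span': "mat_span n q {..<m} Ls' = mat_span n q ({..<n} \<times> {..<q}) (\<lambda>(i,j). Lblock \<L> n q i j)"
    and constr: "construction \<L> n q m Ls A B"
    and constr': "construction \<L> n q m Ls' A' B'"
  defines "H \<equiv> gram_form m B Ls"
    and "H' \<equiv> gram_form m B' Ls'"
    and "Lh \<equiv> hat_mat m n q Ls"
    and "Lh' \<equiv> hat_mat m n q Ls'"
    and "Ah \<equiv> hat_mat m n q A"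
    and "Ah' \<equiv> hat_mat m n q A'"
    and "\<Phi> \<equiv> gram_form m B A'"
    and "\<Xi> \<equiv> gram_form m B Ls'"
  shows "Lh = mat_conj H * Ah \<and> Lh' = mat_conj H' * Ah' \<and> Lh = mat_conj \<Phi> * Lh'
       \<and> mat_adjoint (mat_conj \<Phi>) * Ah = Ah' \<and> Lh = mat_conj \<Xi> * Ah'
       \<and> Lh' = mat_adjoint (mat_conj \<Xi>) * Ah
       \<and> H = \<Phi> * H' * mat_adjoint \<Phi>
       \<and> H = \<Phi> * mat_adjoint \<Xi> \<and> \<Phi> * H' = \<Xi>
       \<and> invertible_mat \<Phi> \<and> invertible_mat \<Xi>
       \<and> \<Phi> * gram_form m B' A = 1\<^sub>m m \<and> gram_form m B' A * \<Phi> = 1\<^sub>m m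
       \<and> mat_adjoint \<Xi> = gram_form m B' Ls
       \<and> mat_kernel Lh = mat_kernel (choi \<L> n q) \<and> mat_kernel Lh' = mat_kernel (choi \<L> n q)
       \<and> mat_kernel Ah = mat_kernel (choi \<L> n q) \<and> mat_kernel Ah' = mat_kernel (choi \<L> n q)"
proof -
  have cL: "\<And>k. k < m \<Longrightarrow> Ls k \<in> carrier_mat n q" using Ls_carr by blast
  have cL': "\<And>k. k < m \<Longrightarrow> Ls' k \<in> carrier_mat n q" using Ls'_carr by blast
  interpret c: cons \<L> n q m Ls A B by (rule cons.intro) (rule starlin constr Ls_carr)+
  interpret d: cons \<L> n q m Ls' A' B' by (rule cons.intro) (rule starlin constr' Ls'_carr)+
  interpret t: two \<L> n q m Ls A B Ls' A' B' unfolding two_def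
    using c.cons_axioms d.cons_axioms by blast
  interpret t': two \<L> n q m Ls' A' B' Ls A B unfolding two_def
    using c.cons_axioms d.cons_axioms by blast
  have cA: "\<And>k. k < m \<Longrightarrow> A k \<in> carrier_mat n q" by (rule c.Acarr)
  have cB: "\<And>k. k < m \<Longrightarrow> B k \<in> carrier_mat n q" by (rule c.Bcarr)
  have cA': "\<And>k. k < m \<Longrightarrow> A' k \<in> carrier_mat n q" by (rule d.Acarr)
  have cB': "\<And>k. k < m \<Longrightarrow> B' k \<in> carrier_mat n q" by (rule d.Bcarr)
  have IL: "Ind n q m Ls" by (rule c.Ind_rank[OF rank])
  have IL': "Ind n q m Ls'" by (rule d.Ind_rank[OF rank])
  have IA: "Ind n q m A" by (rule c.F3[OF IL])
  have IA': "Ind n q m A'" by (rule d.F3[OF IL'])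
  define Psi where "Psi = gram_form m B' A"
  have gH: "\<And>k l. k < m \<Longrightarrow> l < m \<Longrightarrow> H $$ (k,l) = GG n q B Ls k l"
    unfolding H_def using gram_index cB cL by blast
  have gH': "\<And>k l. k < m \<Longrightarrow> l < m \<Longrightarrow> H' $$ (k,l) = GG n q B' Ls' k l"
    unfolding H'_def using gram_index cB' cL' by blast
  have gP: "\<And>k l. k < m \<Longrightarrow> l < m \<Longrightarrow> \<Phi> $$ (k,l) = GG n q B A' k l"
    unfolding \<Phi>_def using gram_index cB cA' by blast
  have gX: "\<And>k l. k < m \<Longrightarrow> l < m \<Longrightarrow> \<Xi> $$ (k,l) = GG n q B Ls' k l"
    unfolding \<Xi>_def using gram_index cB cL' by blast
  have gPsi: "\<And>k l. k < m \<Longrightarrow> l < m \<Longrightarrow> Psi $$ (k,l) = GG n q B' A k l"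
    unfolding Psi_def using gram_index cB' cA by blast
  have gXs: "\<And>k l. k < m \<Longrightarrow> l < m \<Longrightarrow> gram_form m B' Ls $$ (k,l) = GG n q B' Ls k l"
    using gram_index cB' cL by blast
  have H: "H \<in> carrier_mat m m" unfolding H_def by (rule gram_carrier)
  have H': "H' \<in> carrier_mat m m" unfolding H'_def by (rule gram_carrier)
  have P: "\<Phi> \<in> carrier_mat m m" unfolding \<Phi>_def by (rule gram_carrier)
  have X: "\<Xi> \<in> carrier_mat m m" unfolding \<Xi>_def by (rule gram_carrier)
  have Psi: "Psi \<in> carrier_mat m m" unfolding Psi_def by (rule gram_carrier)
  have XsC: "gram_form m B' Ls \<in> carrier_mat m m" by (rule gram_carrier)

  have r1: "Lh = mat_conj H * Ah" unfolding Lh_def Ah_def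
  proof (rule hat_lemma)
    fix k p assume k: "k < m" and p: "p \<in> {..<n}\<times>{..<q}"
    show "Ls k $$ p = (\<Sum>l<m. conjugate (mat_conj H $$ (k,l)) * A l $$ p)"
      using c.F1[OF k p] k H gH by (auto intro!: sum.cong)
  qed (use Ls_carr cA H in auto)
  have r2: "Lh' = mat_conj H' * Ah'" unfolding Lh'_def Ah'_def
  proof (rule hat_lemma)
    fix k p assume k: "k < m" and p: "p \<in> {..<n}\<times>{..<q}"
    show "Ls' k $$ p = (\<Sum>l<m. conjugate (mat_conj H' $$ (k,l)) * A' l $$ p)"
      using d.F1[OF k p] k H' gH' by (auto intro!: sum.cong)
  qed (use Ls'_carr cA' H' in auto)
  have r3: "Lh = mat_conj \<Phi> * Lh'" unfolding Lh_def Lh'_def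
  proof (rule hat_lemma)
    fix k p assume k: "k < m" and p: "p \<in> {..<n}\<times>{..<q}"
    show "Ls k $$ p = (\<Sum>l<m. conjugate (mat_conj \<Phi> $$ (k,l)) * Ls' l $$ p)"
      using t.X1[OF k p] k P gP by (auto intro!: sum.cong)
  qed (use Ls_carr Ls'_carr P in auto)
  have r4: "mat_adjoint (mat_conj \<Phi>) * Ah = Ah'" unfolding Ah_def Ah'_def
  proof (rule sym, rule hat_lemma)
    fix k p assume k: "k < m" and p: "p \<in> {..<n}\<times>{..<q}"
    show "A' k $$ p = (\<Sum>l<m. conjugate (mat_adjoint (mat_conj \<Phi>) $$ (k,l)) * A l $$ p)"
      using t.X3[OF IL' k p] k P gP by (auto simp: mult.commute intro!: sum.cong)
  qed (use cA cA' P in auto)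
  have r5: "Lh = mat_conj \<Xi> * Ah'" unfolding Lh_def Ah'_def
  proof (rule hat_lemma)
    fix k p assume k: "k < m" and p: "p \<in> {..<n}\<times>{..<q}"
    show "Ls k $$ p = (\<Sum>l<m. conjugate (mat_conj \<Xi> $$ (k,l)) * A' l $$ p)"
      using t.X2[OF k p] k X gX by (auto intro!: sum.cong)
  qed (use Ls_carr cA' X in auto)
  have r6: "Lh' = mat_adjoint (mat_conj \<Xi>) * Ah" unfolding Lh'_def Ah_def
  proof (rule hat_lemma)
    fix k p assume k: "k < m" and p: "p \<in> {..<n}\<times>{..<q}"
    have "Ls' k $$ p = (\<Sum>l<m. GG n q B' Ls k l * A l $$ p)" by (rule t'.X2[OF k p])
    also have "\<dots> = (\<Sum>l<m. conjugate (mat_adjoint (mat_conj \<Xi>) $$ (k,l)) * A l $$ p)"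
    proof (rule sum.cong[OF refl])
      fix l assume l: "l \<in> {..<m}"
      then have "conjugate (mat_adjoint (mat_conj \<Xi>) $$ (k,l)) = conjugate (GG n q B Ls' l k)"
        using k X gX by simp
      also have "\<dots> = GG n q B' Ls k l" using t.X4 k l by simp
      finally show "GG n q B' Ls k l * A l $$ p = conjugate (mat_adjoint (mat_conj \<Xi>) $$ (k,l)) * A l $$ p" by simp
    qed
    finally show "Ls' k $$ p = (\<Sum>l<m. conjugate (mat_adjoint (mat_conj \<Xi>) $$ (k,l)) * A l $$ p)" .
  qed (use Ls'_carr cA X in auto)
  have r8: "H = \<Phi> * mat_adjoint \<Xi>"
  proof (rule mat_mult_entries[OF P _ H])
    show "mat_adjoint \<Xi> \<in> carrier_mat m m" using X by auto
    fix k j assume k: "k < m" and j: "j < m"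
    show "H $$ (k,j) = (\<Sum>r<m. \<Phi> $$ (k,r) * mat_adjoint \<Xi> $$ (r,j))"
      using t.X7[OF k j] k j gH gP gX X by (auto intro!: sum.cong)
  qed
  have r9: "\<Phi> * H' = \<Xi>"
  proof (rule sym, rule mat_mult_entries[OF P H' X])
    fix k j assume k: "k < m" and j: "j < m"
    show "\<Xi> $$ (k,j) = (\<Sum>r<m. \<Phi> $$ (k,r) * H' $$ (r,j))"
      using t.X6[OF k j] k j gH' gP gX by (auto intro!: sum.cong)
  qed
  have adjX: "mat_adjoint \<Xi> = H' * mat_adjoint \<Phi>"
  proof (rule mat_mult_entries[OF H'])
    show "mat_adjoint \<Phi> \<in> carrier_mat m m" "mat_adjoint \<Xi> \<in> carrier_mat m m" using P X by auto
    fix r j assume r: "r < m" and j: "j < m"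
    have "mat_adjoint \<Xi> $$ (r,j) = conjugate (GG n q B Ls' j r)" using X gX r j by simp
    also have "\<dots> = conjugate (\<Sum>s<m. GG n q B A' j s * GG n q B' Ls' s r)" using t.X6[OF j r] by simp
    also have "\<dots> = (\<Sum>s<m. conjugate (GG n q B A' j s) * conjugate (GG n q B' Ls' s r))"
      by (simp add: sum_conjugate conjugate_dist_mul)
    also have "\<dots> = (\<Sum>s<m. H' $$ (r,s) * mat_adjoint \<Phi> $$ (s,j))"
    proof (rule sum.cong[OF refl])
      fix s assume s: "s \<in> {..<m}"
      have "H' $$ (r,s) = conjugate (GG n q B' Ls' s r)" using gH' d.F4[of r s] r s by simp
      moreover have "mat_adjoint \<Phi> $$ (s,j) = conjugate (GG n q B A' j s)" using P gP s j by simp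
      ultimately show "conjugate (GG n q B A' j s) * conjugate (GG n q B' Ls' s r) = H' $$ (r,s) * mat_adjoint \<Phi> $$ (s,j)"
        by (simp add: mult.commute)
    qed
    finally show "mat_adjoint \<Xi> $$ (r,j) = (\<Sum>s<m. H' $$ (r,s) * mat_adjoint \<Phi> $$ (s,j))" .
  qed
  have r7: "H = \<Phi> * H' * mat_adjoint \<Phi>"
  proof -
    have aP: "mat_adjoint \<Phi> \<in> carrier_mat m m" using P by auto
    show ?thesis unfolding r8 adjX by (rule assoc_mult_mat[symmetric, OF P H' aP])
  qed
  have r12: "\<Phi> * Psi = 1\<^sub>m m"
  proof (rule eq_matI)
    fix k r assume "k < dim_row (1\<^sub>m m :: 'a mat)" "r < dim_col (1\<^sub>m m :: 'a mat)"
    then have k: "k < m" and r: "r < m" by auto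
    have h: "\<forall>j<m. \<forall>p'\<in>{..<n}\<times>{..<q}. Ls' j $$ p' = (\<Sum>r<m. GG n q B' A j r * Ls r $$ p')"
      using t'.X1 by blast
    have "(\<Phi> * Psi) $$ (k,r) = (\<Sum>j<m. GG n q B A' k j * GG n q B' A j r)"
      using P Psi k r gP gPsi by (auto simp: scalar_prod_def lessThan_atLeast0 intro!: sum.cong)
    also have "\<dots> = (if r = k then 1 else 0)" by (rule t.X10[OF IL h k r])
    finally show "(\<Phi> * Psi) $$ (k,r) = 1\<^sub>m m $$ (k,r)" using k r by auto
  qed (use P Psi in auto)
  have r13: "Psi * \<Phi> = 1\<^sub>m m"
  proof (rule eq_matI)
    fix k r assume "k < dim_row (1\<^sub>m m :: 'a mat)" "r < dim_col (1\<^sub>m m :: 'a mat)"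
    then have k: "k < m" and r: "r < m" by auto
    have h: "\<forall>j<m. \<forall>p'\<in>{..<n}\<times>{..<q}. Ls j $$ p' = (\<Sum>r<m. GG n q B A' j r * Ls' r $$ p')"
      using t.X1 by blast
    have "(Psi * \<Phi>) $$ (k,r) = (\<Sum>j<m. GG n q B' A k j * GG n q B A' j r)"
      using P Psi k r gP gPsi by (auto simp: scalar_prod_def lessThan_atLeast0 intro!: sum.cong)
    also have "\<dots> = (if r = k then 1 else 0)" by (rule t'.X10[OF IL' h k r])
    finally show "(Psi * \<Phi>) $$ (k,r) = 1\<^sub>m m $$ (k,r)" using k r by auto
  qed (use P Psi in auto)
  have r10: "invertible_mat \<Phi>"
    unfolding invertible_mat_def inverts_mat_def using P Psi r12 r13 by (intro conjI exI[of _ Psi]) auto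
  have r11: "invertible_mat \<Xi>"
  proof (rule inv_left[OF X], rule allI, rule impI)
    fix c assume h: "\<forall>j<m. (\<Sum>k<m. c k * \<Xi> $$ (k,j)) = 0"
    have e: "\<forall>j<m. (\<Sum>k<m. c k * \<Xi> $$ (k,j)) = (\<Sum>k<m. c k * GG n q B Ls' k j)"
      using gX by (auto intro!: sum.cong)
    have "\<forall>j<m. (\<Sum>k<m. c k * GG n q B Ls' k j) = 0"
      using h e by simp
    then show "\<forall>k<m. c k = 0" using t.X11[OF IL] by blast
  qed
  have r14: "mat_adjoint \<Xi> = gram_form m B' Ls"
  proof (rule eq_matI)
    fix k l assume "k < dim_row (gram_form m B' Ls)" "l < dim_col (gram_form m B' Ls)"
    then have k: "k < m" and l: "l < m" using XsC by auto
    show "mat_adjoint \<Xi> $$ (k,l) = gram_form m B' Ls $$ (k,l)"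
      using X gX gXs k l t.X4[OF l k] by simp
  qed (use X XsC in auto)
  have k1: "mat_kernel Lh = mat_kernel (choi \<L> n q)" unfolding Lh_def by (rule c.ker_L[OF IA])
  have k2: "mat_kernel Lh' = mat_kernel (choi \<L> n q)" unfolding Lh'_def by (rule d.ker_L[OF IA'])
  have k3: "mat_kernel Ah = mat_kernel (choi \<L> n q)" unfolding Ah_def by (rule c.ker_A[OF IL])
  have k4: "mat_kernel Ah' = mat_kernel (choi \<L> n q)" unfolding Ah'_def by (rule d.ker_A[OF IL'])
  show ?thesis using r1 r2 r3 r4 r5 r6 r7 r8 r9 r10 r11 r12 r13 r14 k1 k2 k3 k4
    unfolding Psi_def by blast
qed

end
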